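(* Let $R$ be a compact Hausdorff topological semiring. If $\theta$ is an equivalence relation on $R$ that is open in $R\times R$, then there exists a congruence $\theta_0$ on $R$ that is open in $R\times R$ and satisfies $\theta_0\subseteq\theta$.
   Context: A semiring is an algebra $(R,+,\cdot,0)$ such that $(R,+,0)$ is a commutative monoid, $(R,\cdot)$ is a semigroup (no multiplicative identity is required), multiplication distributes over addition on both sides, and $0\cdot x = x\cdot 0 = 0$ for all $x\in R$. A topological semiring is a semiring with a topology in which addition and multiplication are continuous. A congruence on $R$ is an equivalence relation on $R$ that is a congruence for both the additive monoid and the multiplicative semigroup (equivalently, a subsemiring of $R\times R$). *)

theory Defs
  imports "HOL-Analysis.Analysis"
begin

definition semiring_congruence :: "('a::semiring_0 \<times> 'a) set \<Rightarrow> bool" where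
  "semiring_congruence \<theta> \<longleftrightarrow> equiv UNIV \<theta> \<and>
     (\<forall>a b c d. (a, b) \<in> \<theta> \<longrightarrow> (c, d) \<in> \<theta> \<longrightarrow>
        (a + c, b + d) \<in> \<theta> \<and> (a * c, b * d) \<in> \<theta>)"

end

theory Submission
  imports Defs
begin

lemma open_all:
  fixes F :: "'q::topological_space \<times> 'p::topological_space \<Rightarrow> 'r::topological_space"
  assumes K: "compact (UNIV::'p set)" and F: "continuous_on UNIV F" and S: "open S"
  shows "open {q. \<forall>p. F (q,p) \<in> S}"
proof (subst open_subopen, intro ballI)
  fix q assume q: "q \<in> {q. \<forall>p. F (q,p) \<in> S}"
  have W: "open (UNIV \<inter> F -` S)"
    using continuous_on_open_vimage[OF open_UNIV, of F] F S by simp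
  have "{q} \<times> UNIV \<subseteq> UNIV \<inter> F -` S" using q by auto
  from Elementary_Topology.tube_lemma[OF K W this] obtain X0 where X0: "q \<in> X0" "open X0" "X0 \<times> UNIV \<subseteq> UNIV \<inter> F -` S"
    by blast
  then have "X0 \<subseteq> {q. \<forall>p. F (q,p) \<in> S}" by auto
  with X0 show "\<exists>T. open T \<and> q \<in> T \<and> T \<subseteq> {q. \<forall>p. F (q,p) \<in> S}" by blast
qed

lemma cont2:
  assumes op: "continuous_on UNIV (\<lambda>p::'a::topological_space \<times> 'a. h (fst p) (snd p))"
    and f: "continuous_on UNIV f" and g: "continuous_on UNIV g"
  shows "continuous_on UNIV (\<lambda>x. h (f x) (g x))"
  using continuous_on_compose2[OF op continuous_on_Pair[OF f g]] by simp

theorem lemma4p5: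
  fixes \<theta> :: "('a::{semiring_0, t2_space} \<times> 'a) set"
  assumes "compact (UNIV :: 'a set)"
    and "continuous_on UNIV (\<lambda>p::'a \<times> 'a. fst p + snd p)"
    and "continuous_on UNIV (\<lambda>p::'a \<times> 'a. fst p * snd p)"
    and "equiv UNIV \<theta>"
    and "open \<theta>"
  shows "\<exists>\<theta>0. semiring_congruence \<theta>0 \<and> open \<theta>0 \<and> \<theta>0 \<subseteq> \<theta>"
proof -
  note K = assms(1) and ad = assms(2) and mu = assms(3) and eq = assms(4) and op = assms(5)
  have KK: "compact (UNIV :: ('a \<times> 'a \<times> 'a) set)"
    using compact_Times[OF K compact_Times[OF K K]] by simp
  have refl: "(x,x) \<in> \<theta>" for x using eq unfolding equiv_def refl_on_def by blast
  have sym: "(x,y) \<in> \<theta> \<Longrightarrow> (y,x) \<in> \<theta>" for x y using eq unfolding equiv_def sym_def by blast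
  have trans: "(x,y) \<in> \<theta> \<Longrightarrow> (y,z) \<in> \<theta> \<Longrightarrow> (x,z) \<in> \<theta>" for x y z
    using eq unfolding equiv_def trans_def by blast
  define P where "P = (\<lambda>a b. \<forall>s u v. (s + a, s + b) \<in> \<theta> \<and> (s + u * a, s + u * b) \<in> \<theta>
       \<and> (s + a * v, s + b * v) \<in> \<theta> \<and> (s + u * a * v, s + u * b * v) \<in> \<theta>)"
  define T where "T = {(a,b). P a b}"
  have Prefl: "P a a" for a unfolding P_def using refl by blast
  have Psym: "P a b \<Longrightarrow> P b a" for a b unfolding P_def using sym by blast
  have Ptrans: "P a b \<Longrightarrow> P b c \<Longrightarrow> P a c" for a b c unfolding P_def using trans by blast
  have Padd1: "P (a + c) (b + c)" if "P a b" for a b c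
    unfolding P_def
  proof (intro allI)
    fix s u v
    have "(s + c + a, s + c + b) \<in> \<theta>" "(s + u * c + u * a, s + u * c + u * b) \<in> \<theta>"
      "(s + c * v + a * v, s + c * v + b * v) \<in> \<theta>" "(s + u * c * v + u * a * v, s + u * c * v + u * b * v) \<in> \<theta>"
      using that unfolding P_def by blast+
    then show "(s + (a + c), s + (b + c)) \<in> \<theta> \<and> (s + u * (a + c), s + u * (b + c)) \<in> \<theta> \<and>
         (s + (a + c) * v, s + (b + c) * v) \<in> \<theta> \<and> (s + u * (a + c) * v, s + u * (b + c) * v) \<in> \<theta>"
      by (simp add: algebra_simps)
  qed
  have Padd2: "P (c + a) (c + b)" if "P a b" for a b c
    using Padd1[OF that, of c] by (simp add: add.commute)
  have Pmul1: "P (a * c) (b * c)" if "P a b" for a b c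
    unfolding P_def
  proof (intro allI)
    fix s u v
    have "(s + a * c, s + b * c) \<in> \<theta>" "(s + u * a * c, s + u * b * c) \<in> \<theta>"
      "(s + a * (c * v), s + b * (c * v)) \<in> \<theta>" "(s + u * a * (c * v), s + u * b * (c * v)) \<in> \<theta>"
      using that unfolding P_def by blast+
    then show "(s + (a * c), s + (b * c)) \<in> \<theta> \<and> (s + u * (a * c), s + u * (b * c)) \<in> \<theta> \<and>
         (s + (a * c) * v, s + (b * c) * v) \<in> \<theta> \<and> (s + u * (a * c) * v, s + u * (b * c) * v) \<in> \<theta>"
      by (simp add: mult.assoc)
  qed
  have Pmul2: "P (c * a) (c * b)" if "P a b" for a b c
    unfolding P_def
  proof (intro allI)
    fix s u v
    have "(s + c * a, s + c * b) \<in> \<theta>" "(s + (u * c) * a, s + (u * c) * b) \<in> \<theta>"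
      "(s + c * a * v, s + c * b * v) \<in> \<theta>" "(s + (u * c) * a * v, s + (u * c) * b * v) \<in> \<theta>"
      using that unfolding P_def by blast+
    then show "(s + (c * a), s + (c * b)) \<in> \<theta> \<and> (s + u * (c * a), s + u * (c * b)) \<in> \<theta> \<and>
         (s + (c * a) * v, s + (c * b) * v) \<in> \<theta> \<and> (s + u * (c * a) * v, s + u * (c * b) * v) \<in> \<theta>"
      by (simp add: mult.assoc)
  qed
  have cong: "semiring_congruence T"
    unfolding semiring_congruence_def T_def
  proof (intro conjI allI impI)
    show "equiv UNIV {(a, b). P a b}"
      unfolding equiv_def refl_on_def sym_def trans_def using Prefl Psym Ptrans by blast
  next
    fix a b c d assume "(a, b) \<in> {(a, b). P a b}" "(c, d) \<in> {(a, b). P a b}"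
    then have ab: "P a b" and cd: "P c d" by auto
    show "(a + c, b + d) \<in> {(a, b). P a b}"
      using Ptrans[OF Padd1[OF ab] Padd2[OF cd]] by simp
    show "(a * c, b * d) \<in> {(a, b). P a b}"
      using Ptrans[OF Pmul1[OF ab] Pmul2[OF cd]] by simp
  qed
  have sub: "T \<subseteq> \<theta>"
  proof
    fix x assume "x \<in> T"
    then obtain a b where x: "x = (a,b)" "P a b" unfolding T_def by blast
    then have "(0 + a, 0 + b) \<in> \<theta>" unfolding P_def by blast
    then show "x \<in> \<theta>" using x by simp
  qed
  have c1: "continuous_on UNIV (\<lambda>x. f x + g x)" if "continuous_on UNIV f" "continuous_on UNIV g" for f g :: "('a \<times> 'a) \<times> 'a \<times> 'a \<times> 'a \<Rightarrow> 'a"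
    using cont2[OF ad that] .
  have c2: "continuous_on UNIV (\<lambda>x. f x * g x)" if "continuous_on UNIV f" "continuous_on UNIV g" for f g :: "('a \<times> 'a) \<times> 'a \<times> 'a \<times> 'a \<Rightarrow> 'a"
    using cont2[OF mu that] .
  have cp: "continuous_on UNIV (\<lambda>x. (f x, g x))" if "continuous_on UNIV f" "continuous_on UNIV g" for f g :: "('a \<times> 'a) \<times> 'a \<times> 'a \<times> 'a \<Rightarrow> 'a"
    using continuous_on_Pair[OF that] .
  define S1 where "S1 = {q::'a\<times>'a. \<forall>p::'a\<times>'a\<times>'a. (\<lambda>(q,p). (fst p + fst q, fst p + snd q)) (q,p) \<in> \<theta>}"
  define S2 where "S2 = {q::'a\<times>'a. \<forall>p::'a\<times>'a\<times>'a. (\<lambda>(q,p). (fst p + fst (snd p) * fst q, fst p + fst (snd p) * snd q)) (q,p) \<in> \<theta>}"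
  define S3 where "S3 = {q::'a\<times>'a. \<forall>p::'a\<times>'a\<times>'a. (\<lambda>(q,p). (fst p + fst q * snd (snd p), fst p + snd q * snd (snd p))) (q,p) \<in> \<theta>}"
  define S4 where "S4 = {q::'a\<times>'a. \<forall>p::'a\<times>'a\<times>'a. (\<lambda>(q,p). (fst p + fst (snd p) * fst q * snd (snd p), fst p + fst (snd p) * snd q * snd (snd p))) (q,p) \<in> \<theta>}"
  have "open S1" unfolding S1_def
    by (rule open_all[OF KK _ op]) (simp add: case_prod_beta; intro cp c1 c2 continuous_intros)
  moreover have "open S2" unfolding S2_def
    by (rule open_all[OF KK _ op]) (simp add: case_prod_beta; intro cp c1 c2 continuous_intros)
  moreover have "open S3" unfolding S3_def
    by (rule open_all[OF KK _ op]) (simp add: case_prod_beta; intro cp c1 c2 continuous_intros)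
  moreover have "open S4" unfolding S4_def
    by (rule open_all[OF KK _ op]) (simp add: case_prod_beta; intro cp c1 c2 continuous_intros)
  moreover have "T = S1 \<inter> S2 \<inter> S3 \<inter> S4"
    unfolding T_def S1_def S2_def S3_def S4_def P_def by auto
  ultimately have "open T" by auto
  with cong sub show ?thesis by blast
qed

end
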